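(* Let $N\ge2$ and let $F=F(N,\mathcal D)$ be a connected GSC with $|\mathcal D|>N$. Then $|\mathcal D|\ge 2N-1$. Conversely, for every integer $k\ge2N-1$ with $k\le N^2-1$, and for $k=N$, there exists a digit set $\mathcal D\subset\{0,\dots,N-1\}^2$ with $|\mathcal D|=k$ such that $F(N,\mathcal D)$ is connected.
   Context: GSC: $N\ge2$, $\mathcal D\subset\{0,\dots,N-1\}^2$ with $1<|\mathcal D|<N^2$, $\varphi_i(x)=\frac1N(x+i)$, and $F(N,\mathcal D)$ is the unique nonempty compact set with $F=\bigcup_{i\in\mathcal D}\varphi_i(F)$. *)

theory Defs
  imports "HOL-Analysis.Analysis"
begin

definition gsc_map :: "nat \<Rightarrow> nat \<times> nat \<Rightarrow> real \<times> real \<Rightarrow> real \<times> real" where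
  "gsc_map N i x = (1 / real N) *\<^sub>R (x + (real (fst i), real (snd i)))"

definition GSC :: "nat \<Rightarrow> (nat \<times> nat) set \<Rightarrow> (real \<times> real) set" where
  "GSC N D = (THE F. compact F \<and> F \<noteq> {} \<and> F = (\<Union>i\<in>D. gsc_map N i ` F))"

end

theory Submission
  imports Defs
begin


lemma gsc_map_pair: "gsc_map N (a,b) (x,y) = ((x + real a) / real N, (y + real b) / real N)"
  by (simp add: gsc_map_def divide_inverse algebra_simps)

lemma gsc_map_fst: "fst (gsc_map N i p) = (fst p + real (fst i)) / real N"
  by (simp add: gsc_map_def divide_inverse algebra_simps)
lemma gsc_map_snd: "snd (gsc_map N i p) = (snd p + real (snd i)) / real N"
  by (simp add: gsc_map_def divide_inverse algebra_simps)

lemma gsc_map_cont: "continuous_on S (gsc_map N i)"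
  unfolding gsc_map_def by (intro continuous_intros)

lemma gsc_map_dist: "dist (gsc_map N i x) (gsc_map N i y) = dist x y / real N"
proof -
  have "gsc_map N i x - gsc_map N i y = (1 / real N) *\<^sub>R (x - y)"
    by (simp add: gsc_map_def algebra_simps)
  then show ?thesis by (simp add: dist_norm)
qed

lemma gsc_map_inj: "N > 0 \<Longrightarrow> inj (gsc_map N i)"
  unfolding inj_def gsc_map_def by auto

definition sq :: "(real \<times> real) set" where "sq = {0..1} \<times> {0..1}"

lemma compact_sq: "compact sq" unfolding sq_def by (intro compact_Times compact_Icc)

fun Fk :: "nat \<Rightarrow> (nat \<times> nat) set \<Rightarrow> nat \<Rightarrow> (real \<times> real) set" where
  "Fk N D 0 = sq"
| "Fk N D (Suc k) = (\<Union>i\<in>D. gsc_map N i ` Fk N D k)"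

definition Finf :: "nat \<Rightarrow> (nat \<times> nat) set \<Rightarrow> (real \<times> real) set" where
  "Finf N D = \<Inter> (range (Fk N D))"

lemma grid_finite: "(D::(nat\<times>nat) set) \<subseteq> {0..<N} \<times> {0..<N} \<Longrightarrow> finite D"
  by (erule finite_subset) (intro finite_cartesian_product finite_atLeastLessThan)

lemma map_sq:
  assumes "N > 0" "i \<in> {0..<N} \<times> {0..<N}"
  shows "gsc_map N i ` sq \<subseteq> sq"
proof
  fix p assume "p \<in> gsc_map N i ` sq"
  then obtain q where q: "q \<in> sq" "p = gsc_map N i q" by auto
  obtain a b where ab: "i = (a,b)" by fastforce
  obtain x y where xy: "q = (x,y)" by fastforce
  have "a + 1 \<le> N" "b + 1 \<le> N" using assms ab by auto
  then have "real a + 1 \<le> real N" "real b + 1 \<le> real N" by linarith+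
  moreover have "0 \<le> x" "x \<le> 1" "0 \<le> y" "y \<le> 1" using q xy by (auto simp: sq_def)
  ultimately show "p \<in> sq" using assms q ab xy
    by (auto simp: gsc_map_pair sq_def divide_simps)
qed

locale gsc =
  fixes N :: nat and D :: "(nat \<times> nat) set"
  assumes N: "N \<ge> 2" and Dg: "D \<subseteq> {0..<N} \<times> {0..<N}" and Dne: "D \<noteq> {}"
begin

lemma Npos: "N > 0" using N by auto
lemma finD: "finite D" using grid_finite[OF Dg] .

lemma Fk_compact: "compact (Fk N D k)"
proof (induction k)
  case 0 then show ?case by (simp add: compact_sq)
next
  case (Suc k)
  show ?case unfolding Fk.simps
    by (intro compact_UN finD compact_continuous_image gsc_map_cont Suc)
qed

lemma Fk_ne: "Fk N D k \<noteq> {}"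
  by (induction k) (use Dne in \<open>auto simp: sq_def\<close>)

lemma Fk_sq: "Fk N D k \<subseteq> sq"
proof (induction k)
  case (Suc k) then show ?case using map_sq[OF Npos] Dg by fastforce
qed simp

lemma Fk_Suc_sub: "Fk N D (Suc k) \<subseteq> Fk N D k"
proof (induction k)
  case 0 then show ?case using map_sq[OF Npos] Dg by fastforce
next
  case (Suc k) then show ?case by (auto simp del: Fk.simps(2) simp: Fk.simps(2)[of N D "Suc k"] Fk.simps(2)[of N D k]) blast
qed

lemma Fk_mono: "m \<le> n \<Longrightarrow> Fk N D n \<subseteq> Fk N D m"
  by (induction n rule: dec_induct) (use Fk_Suc_sub in blast)+

lemma Finf_compact: "compact (Finf N D)"
  unfolding Finf_def by (intro compact_Inter) (use Fk_compact in auto)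

lemma Finf_ne: "Finf N D \<noteq> {}"
  unfolding Finf_def by (intro compact_nest Fk_compact Fk_ne Fk_mono)

lemma Finf_sq: "Finf N D \<subseteq> sq"
proof -
  have "Finf N D \<subseteq> Fk N D 0" unfolding Finf_def by blast
  then show ?thesis by simp
qed

lemma Finf_inv: "Finf N D = (\<Union>i\<in>D. gsc_map N i ` Finf N D)"
proof
  show "(\<Union>i\<in>D. gsc_map N i ` Finf N D) \<subseteq> Finf N D"
  proof (rule UN_least)
    fix i assume i: "i \<in> D"
    show "gsc_map N i ` Finf N D \<subseteq> Finf N D" unfolding Finf_def
    proof (rule INT_greatest)
      fix k
      have "gsc_map N i ` (\<Inter>(range (Fk N D))) \<subseteq> gsc_map N i ` Fk N D k" by (rule image_mono) blast
      also have "\<dots> \<subseteq> Fk N D (Suc k)" using i unfolding Fk.simps by (rule UN_upper)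
      also have "\<dots> \<subseteq> Fk N D k" by (rule Fk_Suc_sub)
      finally show "gsc_map N i ` (\<Inter>(range (Fk N D))) \<subseteq> Fk N D k" .
    qed
  qed
next
  show "Finf N D \<subseteq> (\<Union>i\<in>D. gsc_map N i ` Finf N D)"
  proof
    fix x assume x: "x \<in> Finf N D"
    have "x \<in> Fk N D (Suc k)" for k using x unfolding Finf_def by blast
    then have "\<exists>i. i \<in> D \<and> x \<in> gsc_map N i ` Fk N D k" for k unfolding Fk.simps by blast
    then obtain f where f: "\<forall>k. f k \<in> D \<and> x \<in> gsc_map N (f k) ` Fk N D k"
      using choice[of "\<lambda>k i. i \<in> D \<and> x \<in> gsc_map N i ` Fk N D k"] by blast
    have "\<exists>i\<in>D. infinite {k. f k = i}"
    proof (rule ccontr)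
      assume a: "\<not> ?thesis"
      have "finite (\<Union>i\<in>D. {k. f k = i})" by (rule finite_UN_I[OF finD]) (use a in blast)
      moreover have "(\<Union>i\<in>D. {k. f k = i}) = UNIV" using f by blast
      ultimately show False by simp
    qed
    then obtain i where i: "i \<in> D" "infinite {k. f k = i}" by blast
    have xk: "x \<in> gsc_map N i ` Fk N D k" for k
    proof -
      obtain m where m: "m \<ge> k" "f m = i" using i(2) unfolding infinite_nat_iff_unbounded_le by blast
      have "x \<in> gsc_map N i ` Fk N D m" using f m(2) by blast
      also have "\<dots> \<subseteq> gsc_map N i ` Fk N D k" by (rule image_mono[OF Fk_mono[OF m(1)]])
      finally show ?thesis .
    qed
    obtain y where y: "x = gsc_map N i y" using xk[of 0] by blast
    have "y \<in> Fk N D k" for k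
    proof -
      obtain z where z: "z \<in> Fk N D k" "x = gsc_map N i z" using xk[of k] by blast
      then have "z = y" using y gsc_map_inj[OF Npos] by (metis injD)
      then show ?thesis using z by simp
    qed
    then have "y \<in> Finf N D" unfolding Finf_def by blast
    then show "x \<in> (\<Union>i\<in>D. gsc_map N i ` Finf N D)" using i y by blast
  qed
qed

lemma uniq_sub:
  assumes G: "compact G" "G \<noteq> {}" "G = (\<Union>i\<in>D. gsc_map N i ` G)"
    and H: "compact H" "H \<noteq> {}" "H = (\<Union>i\<in>D. gsc_map N i ` H)"
  shows "G \<subseteq> H"
proof -
  have cont: "continuous_on G (\<lambda>x. infdist x H)" by (intro continuous_intros)
  obtain x0 where x0: "x0 \<in> G" "\<And>x. x \<in> G \<Longrightarrow> infdist x H \<le> infdist x0 H"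
    using compact_attains_sup[OF compact_continuous_image[OF cont G(1)]] G(2) by auto
  obtain i y where iy: "i \<in> D" "y \<in> G" "x0 = gsc_map N i y" using x0(1) G(3) by blast
  obtain h where h: "h \<in> H" "infdist y H = dist y h"
    using infdist_attains_inf[OF compact_imp_closed[OF H(1)] H(2)] by blast
  have "gsc_map N i h \<in> H" using H(3) iy(1) h(1) by blast
  then have "infdist x0 H \<le> dist x0 (gsc_map N i h)" by (rule infdist_le)
  also have "\<dots> = dist y h / real N" using iy by (simp add: gsc_map_dist)
  also have "\<dots> \<le> infdist x0 H / real N" using h x0(2)[OF iy(2)] Npos by (simp add: divide_right_mono)
  finally have "infdist x0 H \<le> infdist x0 H / real N" .
  then have a1: "infdist x0 H * real N \<le> infdist x0 H" using Npos by (simp add: le_divide_eq)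
  have Nr: "real N \<ge> 2" using N by simp
  have "infdist x0 H * 2 \<le> infdist x0 H * real N" using Nr infdist_nonneg[of x0 H] by (intro mult_left_mono) auto
  then have z: "infdist x0 H \<le> 0" using a1 infdist_nonneg[of x0 H] by linarith
  show ?thesis
  proof
    fix x assume "x \<in> G"
    then have "infdist x H = 0" using x0(2) z infdist_nonneg[of x H] by (meson order_antisym order_trans)
    then show "x \<in> H" using in_closure_iff_infdist_zero[OF H(2)] compact_imp_closed[OF H(1)]
      by (simp add: closure_closed)
  qed
qed

lemma GSC_eq: "GSC N D = Finf N D"
  unfolding GSC_def
proof (rule the_equality)
  show "compact (Finf N D) \<and> Finf N D \<noteq> {} \<and> Finf N D = (\<Union>i\<in>D. gsc_map N i ` Finf N D)"
    using Finf_compact Finf_ne Finf_inv by auto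
  fix F assume "compact F \<and> F \<noteq> {} \<and> F = (\<Union>i\<in>D. gsc_map N i ` F)"
  then show "F = Finf N D"
    using uniq_sub[of F "Finf N D"] uniq_sub[of "Finf N D" F] Finf_compact Finf_ne Finf_inv by blast
qed

end


definition cutconn :: "('a \<Rightarrow> 'a \<Rightarrow> bool) \<Rightarrow> 'a set \<Rightarrow> bool" where
  "cutconn R D \<longleftrightarrow> (\<forall>S. S \<subseteq> D \<longrightarrow> S \<noteq> {} \<longrightarrow> S \<noteq> D \<longrightarrow> (\<exists>x\<in>S. \<exists>y\<in>D - S. R x y))"

lemma cutconnD: "cutconn R D \<Longrightarrow> S \<subseteq> D \<Longrightarrow> S \<noteq> {} \<Longrightarrow> S \<noteq> D \<Longrightarrow> \<exists>x\<in>S. \<exists>y\<in>D - S. R x y"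
  unfolding cutconn_def by blast

lemma cutconn_mono:
  assumes "cutconn R D" "\<And>x y. x \<in> D \<Longrightarrow> y \<in> D \<Longrightarrow> R x y \<Longrightarrow> R' x y"
  shows "cutconn R' D"
  using assms unfolding cutconn_def by (meson Diff_iff subsetD)

lemma growth:
  fixes \<Phi> :: "'a set \<Rightarrow> int" and c :: int
  assumes fin: "finite D" and cc: "cutconn R D" and x0: "x0 \<in> D"
    and step: "\<And>T x y. T \<subseteq> D \<Longrightarrow> x \<in> T \<Longrightarrow> y \<in> D \<Longrightarrow> y \<notin> T \<Longrightarrow> R x y \<Longrightarrow> \<Phi> (insert y T) \<le> \<Phi> T + c"
  shows "\<Phi> D \<le> \<Phi> {x0} + c * (int (card D) - 1)"
proof -
  have claim: "n < card D \<longrightarrow> (\<exists>T. T \<subseteq> D \<and> x0 \<in> T \<and> card T = Suc n \<and> \<Phi> T \<le> \<Phi> {x0} + c * int n)" for n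
  proof (induction n)
    case 0 show ?case by (intro impI exI[of _ "{x0}"]) (use x0 in auto)
  next
    case (Suc n)
    show ?case
    proof
      assume a: "Suc n < card D"
      then obtain T where T: "T \<subseteq> D" "x0 \<in> T" "card T = Suc n" "\<Phi> T \<le> \<Phi> {x0} + c * int n" using Suc by auto
      have "T \<noteq> D" using a T(3) by auto
      then obtain x y where xy: "x \<in> T" "y \<in> D - T" "R x y" using cutconnD[OF cc T(1)] T(2) by blast
      have finT: "finite T" using T(1) fin finite_subset by auto
      have "\<Phi> (insert y T) \<le> \<Phi> T + c" using step[OF T(1) xy(1) _ _ xy(3)] xy(2) by auto
      then have "\<Phi> (insert y T) \<le> \<Phi> {x0} + c * int (Suc n)" using T(4) by (simp add: algebra_simps)
      moreover have "card (insert y T) = Suc (Suc n)" using finT xy(2) T(3) by simp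
      ultimately show "\<exists>T. T \<subseteq> D \<and> x0 \<in> T \<and> card T = Suc (Suc n) \<and> \<Phi> T \<le> \<Phi> {x0} + c * int (Suc n)"
        using T(1,2) xy(2) by (intro exI[of _ "insert y T"]) auto
    qed
  qed
  have "0 < card D" using fin x0 card_gt_0_iff by blast
  then have cD: "card D \<ge> 1" by simp
  obtain T where T: "T \<subseteq> D" "card T = card D" "\<Phi> T \<le> \<Phi> {x0} + c * int (card D - 1)"
    using claim[of "card D - 1"] cD by auto
  have "T = D" using card_subset_eq[OF fin T(1) T(2)] .
  then show ?thesis using T(3) cD by (simp add: of_nat_diff)
qed

definition rng :: "('a \<Rightarrow> int) \<Rightarrow> 'a set \<Rightarrow> int" where
  "rng f T = Max (f ` T) - Min (f ` T)"

lemma rng_insert: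
  assumes "finite T" "x \<in> T"
  shows "rng f (insert y T) \<le> rng f T + \<bar>f y - f x\<bar>"
proof -
  have ne: "f ` T \<noteq> {}" using assms by auto
  have "Max (f ` insert y T) = max (f y) (Max (f ` T))" using assms ne by simp
  moreover have "Min (f ` insert y T) = min (f y) (Min (f ` T))" using assms ne by simp
  moreover have "f x \<le> Max (f ` T)" "Min (f ` T) \<le> f x" using assms by auto
  ultimately show ?thesis unfolding rng_def by (simp add: max_def min_def abs_if)
qed

lemma rng_ge:
  assumes "finite T" "p \<in> T" "q \<in> T" shows "f p - f q \<le> rng f T"
proof -
  have "f p \<le> Max (f ` T)" "Min (f ` T) \<le> f q" using assms by auto
  then show ?thesis unfolding rng_def by simp
qed

lemma rng_single: "rng f {x} = 0" unfolding rng_def by simp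

lemma rng_bound:
  fixes f g :: "'a \<Rightarrow> int"
  assumes fin: "finite D" and cc: "cutconn R D" and x0: "x0 \<in> D"
    and b: "\<And>x y. x \<in> D \<Longrightarrow> y \<in> D \<Longrightarrow> R x y \<Longrightarrow> \<bar>f y - f x\<bar> + \<bar>g y - g x\<bar> \<le> c"
  shows "rng f D + rng g D \<le> c * (int (card D) - 1)"
proof -
  have "(\<lambda>T. rng f T + rng g T) D \<le> (\<lambda>T. rng f T + rng g T) {x0} + c * (int (card D) - 1)"
  proof (rule growth[OF fin cc x0])
    fix T x y assume T: "T \<subseteq> D" "x \<in> T" "y \<in> D" "y \<notin> T" "R x y"
    have "finite T" using T fin finite_subset by auto
    then have "rng f (insert y T) \<le> rng f T + \<bar>f y - f x\<bar>" "rng g (insert y T) \<le> rng g T + \<bar>g y - g x\<bar>"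
      using rng_insert[OF \<open>finite T\<close> T(2)] by auto
    moreover have "\<bar>f y - f x\<bar> + \<bar>g y - g x\<bar> \<le> c" using b T by auto
    ultimately show "rng f (insert y T) + rng g (insert y T) \<le> rng f T + rng g T + c" by linarith
  qed
  then show ?thesis by (simp add: rng_single)
qed

lemma const_conn:
  assumes cc: "cutconn R D" and x0: "x0 \<in> D"
    and b: "\<And>x y. x \<in> D \<Longrightarrow> y \<in> D \<Longrightarrow> R x y \<Longrightarrow> f x = f y"
  shows "\<forall>z\<in>D. f z = f x0"
proof (rule ccontr)
  assume "\<not> ?thesis"
  then have "{z\<in>D. f z = f x0} \<noteq> D" by auto
  then obtain x y where xy: "x \<in> {z\<in>D. f z = f x0}" "y \<in> D - {z\<in>D. f z = f x0}" "R x y"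
    using cutconnD[OF cc, of "{z\<in>D. f z = f x0}"] x0 by blast
  then have "x \<in> D" "y \<in> D" "f x = f x0" "f y \<noteq> f x0" by auto
  then show False using b[OF _ _ xy(3)] by simp
qed

definition shr :: "nat \<times> nat \<Rightarrow> nat \<times> nat \<Rightarrow> bool" where
  "shr x y \<longleftrightarrow> fst x = fst y \<or> snd x = snd y"

lemma card_insert_le1: "finite A \<Longrightarrow> card (insert a A) \<le> card A + 1"
  by (simp add: card_insert_if)

lemma share_count:
  assumes fin: "finite D" and cc: "cutconn shr D"
    and cf: "fst ` D = {0..<N}" and cs: "snd ` D = {0..<N}" and N: "N \<ge> 1"
  shows "2 * N - 1 \<le> card D"
proof -
  have "0 \<in> fst ` D" using cf N by simp
  then obtain x0 where x0: "x0 \<in> D" by blast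
  let ?P = "\<lambda>T. int (card (fst ` T) + card (snd ` T))"
  have "?P D \<le> ?P {x0} + 1 * (int (card D) - 1)"
  proof (rule growth[OF fin cc x0])
    fix T x y assume T: "T \<subseteq> D" "x \<in> T" "y \<in> D" "y \<notin> T" "shr x y"
    have fT: "finite T" using T(1) fin finite_subset by blast
    have c1: "card (fst ` insert y T) \<le> card (fst ` T) + 1"
      unfolding image_insert by (rule card_insert_le1) (use fT in simp)
    have c2: "card (snd ` insert y T) \<le> card (snd ` T) + 1"
      unfolding image_insert by (rule card_insert_le1) (use fT in simp)
    have "fst y \<in> fst ` T \<or> snd y \<in> snd ` T"
    proof (cases "fst x = fst y")
      case True then show ?thesis using T(2) by (metis image_eqI)
    next
      case False then have "snd x = snd y" using T(5) unfolding shr_def by blast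
      then show ?thesis using T(2) by (metis image_eqI)
    qed
    then have "card (fst ` insert y T) = card (fst ` T) \<or> card (snd ` insert y T) = card (snd ` T)"
      by (metis image_insert insert_absorb)
    then have "card (fst ` insert y T) + card (snd ` insert y T) \<le> card (fst ` T) + card (snd ` T) + 1"
      using c1 c2 by linarith
    then show "?P (insert y T) \<le> ?P T + 1" by linarith
  qed
  moreover have "?P D = int (2 * N)" using cf cs by simp
  moreover have "?P {x0} = 2" by simp
  ultimately have "int (2 * N) \<le> 1 + int (card D)" by (simp add: algebra_simps)
  then show ?thesis by linarith
qed

lemma cover:
  fixes h :: "nat \<times> nat \<Rightarrow> nat"
  assumes cc: "cutconn R D"
    and adj: "\<And>x y. x \<in> D \<Longrightarrow> y \<in> D \<Longrightarrow> R x y \<Longrightarrow> h y \<le> h x + 1 \<and> h x \<le> h y + 1"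
    and p: "p \<in> D" and q: "q \<in> D" and c: "h p \<le> c" "c \<le> h q"
  shows "c \<in> h ` D"
proof (rule ccontr)
  assume nc: "c \<notin> h ` D"
  let ?S = "{z\<in>D. h z < c}"
  have "p \<in> ?S" using p c nc by (metis (mono_tags, lifting) image_eqI le_neq_implies_less mem_Collect_eq)
  moreover have "q \<notin> ?S" using c by auto
  ultimately obtain x y where xy: "x \<in> ?S" "y \<in> D - ?S" "R x y" using cutconnD[OF cc, of ?S] q by blast
  then have "h y \<noteq> c" using nc by auto
  moreover have xD: "x \<in> D" "h x < c" "y \<in> D" "\<not> h y < c" using xy by auto
  moreover have "h y \<le> h x + 1" using adj[OF xD(1) xD(3) xy(3)] by simp
  ultimately show False by linarith
qed

lemma card_le_inj:
  assumes "inj_on g D" "g ` D \<subseteq> {0..<N}" shows "card D \<le> N"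
  using card_inj_on_le[OF assms] by simp

lemma no_change_contra:
  fixes f :: "nat \<times> nat \<Rightarrow> nat"
  assumes S: "S \<subseteq> D" "S \<noteq> {}" "S \<noteq> D"
    and mem: "\<And>z. z \<in> D \<Longrightarrow> z \<in> S \<longleftrightarrow> f z \<in> f ` S"
    and cov: "f ` D = {0..<N}"
    and nc: "\<And>j. Suc j < N \<Longrightarrow> (j \<in> f ` S \<longleftrightarrow> Suc j \<in> f ` S)"
  shows False
proof -
  have all: "j < N \<Longrightarrow> (j \<in> f ` S \<longleftrightarrow> 0 \<in> f ` S)" for j
  proof (induction j)
    case 0 show ?case by simp
  next
    case (Suc j)
    then have "j < N" by simp
    show ?case using Suc.IH[OF \<open>j < N\<close>] nc[OF Suc.prems] by blast
  qed
  obtain y where y: "y \<in> D" "y \<notin> S" using S by blast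
  obtain x where x: "x \<in> S" using S by blast
  have fy: "f y < N" using cov y(1) by (metis atLeastLessThan_iff image_eqI)
  have "x \<in> D" using x S by blast
  then have fx: "f x < N" using cov by (metis atLeastLessThan_iff image_eqI)
  have "f x \<in> f ` S" using x by blast
  then have "0 \<in> f ` S" using all[OF fx] by blast
  then have "f y \<in> f ` S" using all[OF fy] by blast
  then show False using mem[OF y(1)] y(2) by blast
qed

definition chg :: "nat set \<Rightarrow> nat \<Rightarrow> bool" where
  "chg A j \<longleftrightarrow> (j \<in> A \<longleftrightarrow> Suc j \<notin> A)"

definition iota :: "nat set \<Rightarrow> nat \<Rightarrow> nat" where
  "iota A a = card {j. j < a \<and> chg A j}"

lemma iota_Suc: "iota A (Suc a) = iota A a + (if chg A a then 1 else 0)"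
proof -
  have "{j. j < Suc a \<and> chg A j} = (if chg A a then insert a {j. j < a \<and> chg A j} else {j. j < a \<and> chg A j})"
    by (auto simp: less_Suc_eq)
  then show ?thesis unfolding iota_def by auto
qed

lemma iota_0: "iota A 0 = 0" unfolding iota_def by simp

lemma iota_mono: "a \<le> b \<Longrightarrow> iota A a \<le> iota A b"
  unfolding iota_def by (rule card_mono) auto

lemma iota_zero: "iota A a = 0 \<Longrightarrow> j < a \<Longrightarrow> \<not> chg A j"
  unfolding iota_def by auto

definition iotb :: "nat \<Rightarrow> nat set \<Rightarrow> nat \<Rightarrow> nat" where
  "iotb M A a = card {j. a \<le> j \<and> j < M \<and> chg A j}"

lemma iotb_step: "a < M \<Longrightarrow> iotb M A a = iotb M A (Suc a) + (if chg A a then 1 else 0)"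
proof -
  assume a: "a < M"
  let ?B = "{j. Suc a \<le> j \<and> j < M \<and> chg A j}"
  let ?C = "{j. a \<le> j \<and> j < M \<and> chg A j}"
  have fB: "finite ?B" by (rule finite_subset[of _ "{..<M}"]) auto
  have sub: "?C \<subseteq> insert a ?B"
  proof
    fix x assume "x \<in> ?C"
    then have "a \<le> x" "x < M" "chg A x" by auto
    then show "x \<in> insert a ?B" by (cases "x = a") auto
  qed
  show ?thesis
  proof (cases "chg A a")
    case True
    have e: "?C = insert a ?B" using sub a True by auto
    have "a \<notin> ?B" by simp
    then have "card (insert a ?B) = Suc (card ?B)" using fB by simp
    then show ?thesis unfolding iotb_def e using True by simp
  next
    case False
    have e: "?C = ?B" using sub False by auto
    then show ?thesis unfolding iotb_def using False by simp
  qed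
qed

lemma iotb_M: "iotb M A M = 0" unfolding iotb_def by simp

lemma iotb_fin: "finite {j. a \<le> j \<and> j < M \<and> chg A j}"
  by (rule finite_subset[of _ "{..<M}"]) auto

lemma iotb_anti: "a \<le> b \<Longrightarrow> iotb M A b \<le> iotb M A a"
  unfolding iotb_def by (intro card_mono iotb_fin) auto

lemma iotb_zero: "iotb M A a = 0 \<Longrightarrow> a \<le> j \<Longrightarrow> j < M \<Longrightarrow> \<not> chg A j"
  unfolding iotb_def using iotb_fin[of a M A] by (simp add: card_eq_0_iff)


definition isH :: "nat \<times> nat \<Rightarrow> nat \<times> nat \<Rightarrow> bool" where
  "isH x y \<longleftrightarrow> snd x = snd y \<and> (fst y = Suc (fst x) \<or> fst x = Suc (fst y))"
definition isV :: "nat \<times> nat \<Rightarrow> nat \<times> nat \<Rightarrow> bool" where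
  "isV x y \<longleftrightarrow> fst x = fst y \<and> (snd y = Suc (snd x) \<or> snd x = Suc (snd y))"
definition isDp :: "nat \<times> nat \<Rightarrow> nat \<times> nat \<Rightarrow> bool" where
  "isDp x y \<longleftrightarrow> (fst y = Suc (fst x) \<and> snd y = Suc (snd x)) \<or> (fst x = Suc (fst y) \<and> snd x = Suc (snd y))"
definition isDm :: "nat \<times> nat \<Rightarrow> nat \<times> nat \<Rightarrow> bool" where
  "isDm x y \<longleftrightarrow> (fst y = Suc (fst x) \<and> snd x = Suc (snd y)) \<or> (fst x = Suc (fst y) \<and> snd y = Suc (snd x))"

lemma iota_edge:
  assumes "\<And>z. z \<in> D \<Longrightarrow> z \<in> S \<longleftrightarrow> f z \<in> f ` S" "z \<in> D" "z' \<in> D" "f z' = Suc (f z)"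
  shows "iota (f ` S) (f z') = iota (f ` S) (f z) + (if (z \<in> S \<longleftrightarrow> z' \<notin> S) then 1 else 0)"
proof -
  have "chg (f ` S) (f z) \<longleftrightarrow> (z \<in> S \<longleftrightarrow> z' \<notin> S)"
    unfolding chg_def using assms(1)[OF assms(2)] assms(1)[OF assms(3)] assms(4) by simp
  then show ?thesis using assms(4) iota_Suc[of "f ` S" "f z"] by simp
qed

lemma iotb_edge:
  assumes "\<And>z. z \<in> D \<Longrightarrow> z \<in> S \<longleftrightarrow> f z \<in> f ` S" "z \<in> D" "z' \<in> D" "f z' = Suc (f z)" "f z' \<le> M"
  shows "iotb M (f ` S) (f z) = iotb M (f ` S) (f z') + (if (z \<in> S \<longleftrightarrow> z' \<notin> S) then 1 else 0)"
proof -
  have "chg (f ` S) (f z) \<longleftrightarrow> (z \<in> S \<longleftrightarrow> z' \<notin> S)"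
    unfolding chg_def using assms(1)[OF assms(2)] assms(1)[OF assms(3)] assms(4) by simp
  moreover have "f z < M" using assms(4,5) by simp
  ultimately show ?thesis using assms(4) iotb_step[of "f z" M "f ` S"] by simp
qed

lemma memS:
  fixes f :: "nat \<times> nat \<Rightarrow> nat"
  assumes S: "S \<subseteq> D" and ns: "\<And>x y. x \<in> S \<Longrightarrow> y \<in> D \<Longrightarrow> y \<notin> S \<Longrightarrow> f x \<noteq> f y"
    and z: "z \<in> D"
  shows "z \<in> S \<longleftrightarrow> f z \<in> f ` S"
proof
  assume "z \<in> S" then show "f z \<in> f ` S" by blast
next
  assume "f z \<in> f ` S"
  then obtain x where x: "x \<in> S" "f x = f z" by auto
  show "z \<in> S"
  proof (rule ccontr)
    assume "z \<notin> S"
    then show False using ns[OF x(1) z] x(2) by simp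
  qed
qed

lemma share_conn_p:
  assumes cc: "cutconn R D"
    and pres: "\<And>x y. x \<in> D \<Longrightarrow> y \<in> D \<Longrightarrow> R x y \<Longrightarrow> isH x y \<or> isV x y \<or> isDp x y"
    and O: "(0,0) \<in> D"
    and cf: "fst ` D = {0..<N}" and cs: "snd ` D = {0..<N}"
    and W: "(\<exists>p. (0,p) \<in> D \<and> (N-1,p) \<in> D) \<or> (\<exists>p. (N-1,p) \<in> D \<and> (0,Suc p) \<in> D)
          \<or> (\<exists>a. (a,0) \<in> D \<and> (a,N-1) \<in> D) \<or> (\<exists>a. (a,N-1) \<in> D \<and> (Suc a,0) \<in> D)"
  shows "cutconn shr D"
  unfolding cutconn_def
proof (intro allI impI)
  fix S assume S: "S \<subseteq> D" "S \<noteq> {}" "S \<noteq> D"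
  show "\<exists>x\<in>S. \<exists>y\<in>D - S. shr x y"
  proof (rule ccontr)
    assume ns0: "\<not> (\<exists>x\<in>S. \<exists>y\<in>D - S. shr x y)"
    have ns: "\<not> shr x y" if "x \<in> S" "y \<in> D" "y \<notin> S" for x y using ns0 that by blast
    have nsf: "fst x \<noteq> fst y" if "x \<in> S" "y \<in> D" "y \<notin> S" for x y using ns[OF that] unfolding shr_def by blast
    have nss: "snd x \<noteq> snd y" if "x \<in> S" "y \<in> D" "y \<notin> S" for x y using ns[OF that] unfolding shr_def by blast
    have mc: "z \<in> S \<longleftrightarrow> fst z \<in> fst ` S" if "z \<in> D" for z using memS[OF S(1) nsf that] .
    have mr: "z \<in> S \<longleftrightarrow> snd z \<in> snd ` S" if "z \<in> D" for z using memS[OF S(1) nss that] .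
    have same: "x \<in> S \<longleftrightarrow> y \<in> S" if "x \<in> D" "y \<in> D" "shr x y" for x y
    proof
      assume "x \<in> S" then show "y \<in> S" using ns that by blast
    next
      assume yS: "y \<in> S"
      show "x \<in> S"
      proof (rule ccontr)
        assume "x \<notin> S"
        moreover have "shr y x" using that(3) unfolding shr_def by auto
        ultimately show False using ns[OF yS that(1)] by blast
      qed
    qed
    define \<iota> where "\<iota> = iota (fst ` S)"
    define \<rho> where "\<rho> = iota (snd ` S)"
    have key: "\<forall>z\<in>D. \<iota> (fst z) = \<rho> (snd z)"
    proof (rule ccontr)
      assume nk: "\<not> ?thesis"
      let ?Q = "{z\<in>D. \<iota> (fst z) = \<rho> (snd z)}"
      have "(0,0) \<in> ?Q" using O by (simp add: \<iota>_def \<rho>_def iota_0)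
      moreover have "?Q \<noteq> D" using nk by blast
      ultimately obtain x y where xy: "x \<in> ?Q" "y \<in> D - ?Q" "R x y"
        using cutconnD[OF cc, of ?Q] by blast
      have xD: "x \<in> D" and yD: "y \<in> D" and ix: "\<iota> (fst x) = \<rho> (snd x)" and iy: "\<iota> (fst y) \<noteq> \<rho> (snd y)"
        using xy by auto
      have ec: "\<iota> (fst w') = \<iota> (fst w) + (if (w \<in> S \<longleftrightarrow> w' \<notin> S) then 1 else 0)"
        if "w \<in> D" "w' \<in> D" "fst w' = Suc (fst w)" for w w'
        unfolding \<iota>_def by (rule iota_edge[OF mc that])
      have er: "\<rho> (snd w') = \<rho> (snd w) + (if (w \<in> S \<longleftrightarrow> w' \<notin> S) then 1 else 0)"
        if "w \<in> D" "w' \<in> D" "snd w' = Suc (snd w)" for w w'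
        unfolding \<rho>_def by (rule iota_edge[OF mr that])
      have shxy: "shr x y" if "isH x y \<or> isV x y" using that unfolding isH_def isV_def shr_def by blast
      consider (H) "isH x y" | (V) "isV x y" | (Dp) "isDp x y" using pres[OF xD yD xy(3)] by blast
      then show False
      proof cases
        case H
        have sm: "x \<in> S \<longleftrightarrow> y \<in> S" using same[OF xD yD shxy] H by blast
        from H have "snd x = snd y" unfolding isH_def by blast
        moreover from H have "fst y = Suc (fst x) \<or> fst x = Suc (fst y)" unfolding isH_def by blast
        ultimately show False
          using ec[OF xD yD] ec[OF yD xD] sm ix iy by auto
      next
        case V
        have sm: "x \<in> S \<longleftrightarrow> y \<in> S" using same[OF xD yD shxy] V by blast
        from V have "fst x = fst y" unfolding isV_def by blast
        moreover from V have "snd y = Suc (snd x) \<or> snd x = Suc (snd y)" unfolding isV_def by blast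
        ultimately show False
          using er[OF xD yD] er[OF yD xD] sm ix iy by auto
      next
        case Dp
        then consider "fst y = Suc (fst x)" "snd y = Suc (snd x)" | "fst x = Suc (fst y)" "snd x = Suc (snd y)"
          unfolding isDp_def by blast
        then show False
        proof cases
          case 1 then show False using ec[OF xD yD] er[OF xD yD] ix iy by simp
        next
          case 2 then show False using ec[OF yD xD] er[OF yD xD] ix iy by simp
        qed
      qed
    qed
    have i0: "\<iota> 0 = 0" "\<rho> 0 = 0" by (simp_all add: \<iota>_def \<rho>_def iota_0)
    have im: "\<iota> a \<le> \<iota> b" "\<rho> a \<le> \<rho> b" if "a \<le> b" for a b
      using that by (simp_all add: \<iota>_def \<rho>_def iota_mono)
    have "\<iota> (N-1) = 0 \<or> \<rho> (N-1) = 0"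
      using W
    proof (elim disjE exE conjE)
      fix p assume a: "(0,p) \<in> D" "(N-1,p) \<in> D"
      have "\<iota> 0 = \<rho> p" "\<iota> (N-1) = \<rho> p" using key[rule_format, OF a(1)] key[rule_format, OF a(2)] by simp_all
      then show ?thesis using i0 by simp
    next
      fix p assume a: "(N-1,p) \<in> D" "(0,Suc p) \<in> D"
      have "\<iota> (N-1) = \<rho> p" "\<rho> (Suc p) = 0"
        using key[rule_format, OF a(1)] key[rule_format, OF a(2)] i0 by simp_all
      then show ?thesis using im[of p "Suc p"] by simp
    next
      fix a assume b: "(a,0) \<in> D" "(a,N-1) \<in> D"
      have "\<iota> a = 0" "\<iota> a = \<rho> (N-1)" using key[rule_format, OF b(1)] key[rule_format, OF b(2)] i0 by simp_all
      then show ?thesis by simp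
    next
      fix a assume b: "(a,N-1) \<in> D" "(Suc a,0) \<in> D"
      have "\<iota> a = \<rho> (N-1)" "\<iota> (Suc a) = 0"
        using key[rule_format, OF b(1)] key[rule_format, OF b(2)] i0 by simp_all
      then show ?thesis using im[of a "Suc a"] by simp
    qed
    then show False
    proof
      assume z: "\<iota> (N-1) = 0"
      have "\<And>j. Suc j < N \<Longrightarrow> (j \<in> fst ` S \<longleftrightarrow> Suc j \<in> fst ` S)"
        using iota_zero[of "fst ` S" "N-1"] z unfolding \<iota>_def chg_def by auto
      then show False using no_change_contra[OF S mc cf] by blast
    next
      assume z: "\<rho> (N-1) = 0"
      have "\<And>j. Suc j < N \<Longrightarrow> (j \<in> snd ` S \<longleftrightarrow> Suc j \<in> snd ` S)"
        using iota_zero[of "snd ` S" "N-1"] z unfolding \<rho>_def chg_def by auto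
      then show False using no_change_contra[OF S mr cs] by blast
    qed
  qed
qed


lemma share_conn_m:
  assumes cc: "cutconn R D"
    and pres: "\<And>x y. x \<in> D \<Longrightarrow> y \<in> D \<Longrightarrow> R x y \<Longrightarrow> isH x y \<or> isV x y \<or> isDm x y"
    and O: "(N-1,0) \<in> D"
    and cf: "fst ` D = {0..<N}" and cs: "snd ` D = {0..<N}"
    and W: "(\<exists>p. (0,p) \<in> D \<and> (N-1,p) \<in> D) \<or> (\<exists>p. (0,p) \<in> D \<and> (N-1,Suc p) \<in> D)
          \<or> (\<exists>a. (a,0) \<in> D \<and> (a,N-1) \<in> D) \<or> (\<exists>a. (a,0) \<in> D \<and> (Suc a,N-1) \<in> D)"
  shows "cutconn shr D"
  unfolding cutconn_def
proof (intro allI impI)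
  fix S assume S: "S \<subseteq> D" "S \<noteq> {}" "S \<noteq> D"
  show "\<exists>x\<in>S. \<exists>y\<in>D - S. shr x y"
  proof (rule ccontr)
    assume ns0: "\<not> (\<exists>x\<in>S. \<exists>y\<in>D - S. shr x y)"
    have ns: "\<not> shr x y" if "x \<in> S" "y \<in> D" "y \<notin> S" for x y using ns0 that by blast
    have nsf: "fst x \<noteq> fst y" if "x \<in> S" "y \<in> D" "y \<notin> S" for x y using ns[OF that] unfolding shr_def by blast
    have nss: "snd x \<noteq> snd y" if "x \<in> S" "y \<in> D" "y \<notin> S" for x y using ns[OF that] unfolding shr_def by blast
    have mc: "z \<in> S \<longleftrightarrow> fst z \<in> fst ` S" if "z \<in> D" for z using memS[OF S(1) nsf that] .
    have mr: "z \<in> S \<longleftrightarrow> snd z \<in> snd ` S" if "z \<in> D" for z using memS[OF S(1) nss that] .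
    have same: "x \<in> S \<longleftrightarrow> y \<in> S" if "x \<in> D" "y \<in> D" "shr x y" for x y
    proof
      assume "x \<in> S" then show "y \<in> S" using ns that by blast
    next
      assume yS: "y \<in> S"
      show "x \<in> S"
      proof (rule ccontr)
        assume "x \<notin> S"
        moreover have "shr y x" using that(3) unfolding shr_def by auto
        ultimately show False using ns[OF yS that(1)] by blast
      qed
    qed
    have fle: "fst z \<le> N - 1" if "z \<in> D" for z
    proof -
      have "fst z \<in> {0..<N}" using cf that by blast
      then show ?thesis by simp
    qed
    define \<iota> where "\<iota> = iotb (N-1) (fst ` S)"
    define \<rho> where "\<rho> = iota (snd ` S)"
    have key: "\<forall>z\<in>D. \<iota> (fst z) = \<rho> (snd z)"
    proof (rule ccontr)
      assume nk: "\<not> ?thesis"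
      let ?Q = "{z\<in>D. \<iota> (fst z) = \<rho> (snd z)}"
      have "(N-1,0) \<in> ?Q" using O by (simp add: \<iota>_def \<rho>_def iota_0 iotb_M)
      moreover have "?Q \<noteq> D" using nk by blast
      ultimately obtain x y where xy: "x \<in> ?Q" "y \<in> D - ?Q" "R x y"
        using cutconnD[OF cc, of ?Q] by blast
      have xD: "x \<in> D" and yD: "y \<in> D" and ix: "\<iota> (fst x) = \<rho> (snd x)" and iy: "\<iota> (fst y) \<noteq> \<rho> (snd y)"
        using xy by auto
      have ec: "\<iota> (fst w) = \<iota> (fst w') + (if (w \<in> S \<longleftrightarrow> w' \<notin> S) then 1 else 0)"
        if "w \<in> D" "w' \<in> D" "fst w' = Suc (fst w)" for w w'
        unfolding \<iota>_def by (rule iotb_edge[OF mc that fle[OF that(2)]])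
      have er: "\<rho> (snd w') = \<rho> (snd w) + (if (w \<in> S \<longleftrightarrow> w' \<notin> S) then 1 else 0)"
        if "w \<in> D" "w' \<in> D" "snd w' = Suc (snd w)" for w w'
        unfolding \<rho>_def by (rule iota_edge[OF mr that])
      have shxy: "shr x y" if "isH x y \<or> isV x y" using that unfolding isH_def isV_def shr_def by blast
      consider (H) "isH x y" | (V) "isV x y" | (Dm) "isDm x y" using pres[OF xD yD xy(3)] by blast
      then show False
      proof cases
        case H
        have sm: "x \<in> S \<longleftrightarrow> y \<in> S" using same[OF xD yD shxy] H by blast
        from H have "snd x = snd y" unfolding isH_def by blast
        moreover from H have "fst y = Suc (fst x) \<or> fst x = Suc (fst y)" unfolding isH_def by blast
        ultimately show False
          using ec[OF xD yD] ec[OF yD xD] sm ix iy by auto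
      next
        case V
        have sm: "x \<in> S \<longleftrightarrow> y \<in> S" using same[OF xD yD shxy] V by blast
        from V have "fst x = fst y" unfolding isV_def by blast
        moreover from V have "snd y = Suc (snd x) \<or> snd x = Suc (snd y)" unfolding isV_def by blast
        ultimately show False
          using er[OF xD yD] er[OF yD xD] sm ix iy by auto
      next
        case Dm
        then consider "fst y = Suc (fst x)" "snd x = Suc (snd y)" | "fst x = Suc (fst y)" "snd y = Suc (snd x)"
          unfolding isDm_def by blast
        then show False
        proof cases
          case 1 then show False using ec[OF xD yD] er[OF yD xD] ix iy
            by (cases "x \<in> S"; cases "y \<in> S") auto
        next
          case 2 then show False using ec[OF yD xD] er[OF xD yD] ix iy
            by (cases "x \<in> S"; cases "y \<in> S") auto
        qed
      qed
    qed
    have i0: "\<iota> (N-1) = 0" "\<rho> 0 = 0" by (simp_all add: \<iota>_def \<rho>_def iota_0 iotb_M)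
    have im: "\<iota> b \<le> \<iota> a" "\<rho> a \<le> \<rho> b" if "a \<le> b" for a b
      using that by (simp_all add: \<iota>_def \<rho>_def iota_mono iotb_anti)
    have "\<iota> 0 = 0 \<or> \<rho> (N-1) = 0"
      using W
    proof (elim disjE exE conjE)
      fix p assume a: "(0,p) \<in> D" "(N-1,p) \<in> D"
      have "\<iota> 0 = \<rho> p" "\<iota> (N-1) = \<rho> p" using key[rule_format, OF a(1)] key[rule_format, OF a(2)] by simp_all
      then show ?thesis using i0 by simp
    next
      fix p assume a: "(0,p) \<in> D" "(N-1,Suc p) \<in> D"
      have "\<iota> 0 = \<rho> p" "\<rho> (Suc p) = 0"
        using key[rule_format, OF a(1)] key[rule_format, OF a(2)] i0 by simp_all
      then show ?thesis using im(2)[of p "Suc p"] by simp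
    next
      fix a assume b: "(a,0) \<in> D" "(a,N-1) \<in> D"
      have "\<iota> a = 0" "\<iota> a = \<rho> (N-1)" using key[rule_format, OF b(1)] key[rule_format, OF b(2)] i0 by simp_all
      then show ?thesis by simp
    next
      fix a assume b: "(a,0) \<in> D" "(Suc a,N-1) \<in> D"
      have "\<iota> a = 0" "\<iota> (Suc a) = \<rho> (N-1)"
        using key[rule_format, OF b(1)] key[rule_format, OF b(2)] i0 by simp_all
      then show ?thesis using im(1)[of a "Suc a"] by simp
    qed
    then show False
    proof
      assume z: "\<iota> 0 = 0"
      have "\<And>j. Suc j < N \<Longrightarrow> (j \<in> fst ` S \<longleftrightarrow> Suc j \<in> fst ` S)"
        using iotb_zero[of "N-1" "fst ` S" 0] z unfolding \<iota>_def chg_def by auto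
      then show False using no_change_contra[OF S mc cf] by blast
    next
      assume z: "\<rho> (N-1) = 0"
      have "\<And>j. Suc j < N \<Longrightarrow> (j \<in> snd ` S \<longleftrightarrow> Suc j \<in> snd ` S)"
        using iota_zero[of "snd ` S" "N-1"] z unfolding \<rho>_def chg_def by auto
      then show False using no_change_contra[OF S mr cs] by blast
    qed
  qed
qed


definition Cp :: "(nat \<times> nat) set \<Rightarrow> nat \<Rightarrow> bool" where
  "Cp D N \<longleftrightarrow> (0,0) \<in> D \<and> (N-1,N-1) \<in> D"
definition Cm :: "(nat \<times> nat) set \<Rightarrow> nat \<Rightarrow> bool" where
  "Cm D N \<longleftrightarrow> (N-1,0) \<in> D \<and> (0,N-1) \<in> D"
definition Hok :: "(nat \<times> nat) set \<Rightarrow> nat \<Rightarrow> bool" where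
  "Hok D N \<longleftrightarrow> (\<exists>b. (0,b) \<in> D \<and> (N-1,b) \<in> D) \<or> (Cm D N \<and> (\<exists>b. (0,b) \<in> D \<and> (N-1,Suc b) \<in> D))
      \<or> (Cp D N \<and> (\<exists>b. (N-1,b) \<in> D \<and> (0,Suc b) \<in> D))"
definition Vok :: "(nat \<times> nat) set \<Rightarrow> nat \<Rightarrow> bool" where
  "Vok D N \<longleftrightarrow> (\<exists>a. (a,0) \<in> D \<and> (a,N-1) \<in> D) \<or> (Cm D N \<and> (\<exists>a. (a,0) \<in> D \<and> (Suc a,N-1) \<in> D))
      \<or> (Cp D N \<and> (\<exists>a. (a,N-1) \<in> D \<and> (Suc a,0) \<in> D))"
definition adm :: "(nat \<times> nat) set \<Rightarrow> nat \<Rightarrow> nat \<times> nat \<Rightarrow> nat \<times> nat \<Rightarrow> bool" where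
  "adm D N x y \<longleftrightarrow> (isH x y \<and> Hok D N) \<or> (isV x y \<and> Vok D N) \<or> (isDp x y \<and> Cp D N) \<or> (isDm x y \<and> Cm D N)"

lemma adm_adj:
  assumes "adm D N x y"
  shows "fst y \<le> fst x + 1 \<and> fst x \<le> fst y + 1" "snd y \<le> snd x + 1 \<and> snd x \<le> snd y + 1"
  using assms unfolding adm_def isH_def isV_def isDp_def isDm_def by auto

lemma cover_all:
  fixes h :: "nat \<times> nat \<Rightarrow> nat"
  assumes cc: "cutconn R D"
    and adj: "\<And>x y. x \<in> D \<Longrightarrow> y \<in> D \<Longrightarrow> R x y \<Longrightarrow> h y \<le> h x + 1 \<and> h x \<le> h y + 1"
    and bd: "\<And>z. z \<in> D \<Longrightarrow> h z < N"
    and p: "p \<in> D" "h p = 0" and q: "q \<in> D" "h q = N - 1"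
  shows "h ` D = {0..<N}"
proof
  show "h ` D \<subseteq> {0..<N}" using bd by auto
  show "{0..<N} \<subseteq> h ` D"
  proof
    fix c assume "c \<in> {0..<N}"
    then have "h p \<le> c" "c \<le> h q" using p q by auto
    then show "c \<in> h ` D" using cover[of R D h p q c] cc adj p(1) q(1) by blast
  qed
qed

lemma const_card:
  fixes f :: "nat \<times> nat \<Rightarrow> 'b"
  assumes cc: "cutconn R D" and x0: "x0 \<in> D"
    and b: "\<And>x y. x \<in> D \<Longrightarrow> y \<in> D \<Longrightarrow> R x y \<Longrightarrow> f x = f y"
    and inj: "\<And>x y. x \<in> D \<Longrightarrow> y \<in> D \<Longrightarrow> f x = f y \<Longrightarrow> g x = g y \<Longrightarrow> x = y"
    and gb: "g ` D \<subseteq> {0..<N}"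
  shows "card D \<le> N"
proof -
  have c: "\<forall>z\<in>D. f z = f x0" by (rule const_conn[OF cc x0 b])
  have "inj_on g D"
  proof (rule inj_onI)
    fix x y assume "x \<in> D" "y \<in> D" "g x = g y"
    then show "x = y" using inj c by metis
  qed
  then show ?thesis using card_le_inj gb by blast
qed

lemma comb:
  assumes N: "N \<ge> 2" and Dg: "D \<subseteq> {0..<N} \<times> {0..<N}" and big: "card D > N"
    and cc: "cutconn R D"
    and ad: "\<And>x y. x \<in> D \<Longrightarrow> y \<in> D \<Longrightarrow> R x y \<Longrightarrow> adm D N x y"
  shows "2 * N - 1 \<le> card D"
proof -
  have fin: "finite D" by (rule finite_subset[OF Dg]) auto
  have "D \<noteq> {}" using big by auto
  then obtain x0 where x0: "x0 \<in> D" by blast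
  have adjf: "fst y \<le> fst x + 1 \<and> fst x \<le> fst y + 1" if "x \<in> D" "y \<in> D" "R x y" for x y
    using adm_adj(1)[OF ad[OF that]] .
  have adjs: "snd y \<le> snd x + 1 \<and> snd x \<le> snd y + 1" if "x \<in> D" "y \<in> D" "R x y" for x y
    using adm_adj(2)[OF ad[OF that]] .
  have bdf: "fst z < N" if "z \<in> D" for z using Dg that by auto
  have bds: "snd z < N" if "z \<in> D" for z using Dg that by auto
  have gf: "fst ` D \<subseteq> {0..<N}" "snd ` D \<subseteq> {0..<N}" using Dg by auto
  have N1: "N \<ge> 1" using N by simp
  show ?thesis
  proof (cases "Cp D N \<and> Cm D N")
    case True
    then have c: "(0,0) \<in> D" "(N-1,N-1) \<in> D" "(N-1,0) \<in> D" "(0,N-1) \<in> D"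
      unfolding Cp_def Cm_def by auto
    define f where "f = (\<lambda>z::nat\<times>nat. int (fst z) - int (snd z))"
    define g where "g = (\<lambda>z::nat\<times>nat. int (fst z) + int (snd z))"
    have "rng f D + rng g D \<le> 2 * (int (card D) - 1)"
    proof (rule rng_bound[OF fin cc x0])
      fix x y assume "x \<in> D" "y \<in> D" "R x y"
      then have "fst y \<le> fst x + 1 \<and> fst x \<le> fst y + 1" "snd y \<le> snd x + 1 \<and> snd x \<le> snd y + 1"
        using adjf adjs by auto
      then show "\<bar>f y - f x\<bar> + \<bar>g y - g x\<bar> \<le> 2" unfolding f_def g_def by (simp add: abs_if) linarith?
    qed
    moreover have "f (N-1,0) - f (0,N-1) \<le> rng f D" by (rule rng_ge[OF fin c(3) c(4)])
    moreover have "g (N-1,N-1) - g (0,0) \<le> rng g D" by (rule rng_ge[OF fin c(2) c(1)])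
    ultimately have "4 * (int N - 1) \<le> 2 * (int (card D) - 1)" using N1 unfolding f_def g_def by (simp add: of_nat_diff)
    then have "int (2 * N - 1) \<le> int (card D)" using N1 by (simp add: of_nat_diff)
    then show ?thesis by simp
  next
    case False
    note F = False
    show ?thesis
    proof (cases "Cp D N \<or> Cm D N")
      case False
      then have ncp: "\<not> Cp D N" and ncm: "\<not> Cm D N" by auto
      have R2: "(isH x y \<and> Hok D N) \<or> (isV x y \<and> Vok D N)" if "x \<in> D" "y \<in> D" "R x y" for x y
        using ad[OF that] ncp ncm unfolding adm_def by blast
      show ?thesis
      proof (cases "Hok D N \<and> Vok D N")
        case True
        then obtain b a where hb: "(0,b) \<in> D" "(N-1,b) \<in> D" and va: "(a,0) \<in> D" "(a,N-1) \<in> D"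
          using ncp ncm unfolding Hok_def Vok_def by blast
        have cf: "fst ` D = {0..<N}" by (rule cover_all[OF cc adjf bdf hb(1) _ hb(2)]) auto
        have cs: "snd ` D = {0..<N}" by (rule cover_all[OF cc adjs bds va(1) _ va(2)]) auto
        have "cutconn shr D"
          by (rule cutconn_mono[OF cc]) (use R2 in \<open>auto simp: isH_def isV_def shr_def\<close>)
        then show ?thesis using share_count[OF fin _ cf cs N1] by blast
      next
        case False
        then consider "\<not> Hok D N" | "\<not> Vok D N" by blast
        then have "card D \<le> N"
        proof cases
          case 1
          show ?thesis
          proof (rule const_card[OF cc x0, of fst snd])
            fix x y assume "x \<in> D" "y \<in> D" "R x y"
            then show "fst x = fst y" using R2 1 unfolding isV_def by blast
          qed (use gf in \<open>auto simp: prod_eq_iff\<close>)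
        next
          case 2
          show ?thesis
          proof (rule const_card[OF cc x0, of snd fst])
            fix x y assume "x \<in> D" "y \<in> D" "R x y"
            then show "snd x = snd y" using R2 2 unfolding isH_def by blast
          qed (use gf in \<open>auto simp: prod_eq_iff\<close>)
        qed
        then show ?thesis using big by simp
      qed
    next
      case True
      then consider (P) "Cp D N" "\<not> Cm D N" | (M) "Cm D N" "\<not> Cp D N" using F by blast
      then show ?thesis
      proof cases
        case P
        have R3: "(isH x y \<and> Hok D N) \<or> (isV x y \<and> Vok D N) \<or> isDp x y" if "x \<in> D" "y \<in> D" "R x y" for x y
          using ad[OF that] P unfolding adm_def by blast
        have c: "(0,0) \<in> D" "(N-1,N-1) \<in> D" using P unfolding Cp_def by auto
        show ?thesis
        proof (cases "Hok D N \<or> Vok D N")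
          case True
          have cf: "fst ` D = {0..<N}" by (rule cover_all[OF cc adjf bdf c(1) _ c(2)]) auto
          have cs: "snd ` D = {0..<N}" by (rule cover_all[OF cc adjs bds c(1) _ c(2)]) auto
          have W: "(\<exists>p. (0,p) \<in> D \<and> (N-1,p) \<in> D) \<or> (\<exists>p. (N-1,p) \<in> D \<and> (0,Suc p) \<in> D)
            \<or> (\<exists>a. (a,0) \<in> D \<and> (a,N-1) \<in> D) \<or> (\<exists>a. (a,N-1) \<in> D \<and> (Suc a,0) \<in> D)"
            using True P unfolding Hok_def Vok_def by blast
          have "cutconn shr D"
          proof (rule share_conn_p[OF cc _ c(1) cf cs W])
            fix x y assume "x \<in> D" "y \<in> D" "R x y"
            then show "isH x y \<or> isV x y \<or> isDp x y" using R3 by blast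
          qed
          then show ?thesis using share_count[OF fin _ cf cs N1] by blast
        next
          case False
          have "card D \<le> N"
          proof (rule const_card[OF cc x0, of "\<lambda>z. int (fst z) - int (snd z)" fst])
            fix x y assume "x \<in> D" "y \<in> D" "R x y"
            then have "isDp x y" using R3 False by blast
            then show "int (fst x) - int (snd x) = int (fst y) - int (snd y)" unfolding isDp_def by auto
          qed (use gf in \<open>auto simp: prod_eq_iff\<close>)
          then show ?thesis using big by simp
        qed
      next
        case M
        have R3: "(isH x y \<and> Hok D N) \<or> (isV x y \<and> Vok D N) \<or> isDm x y" if "x \<in> D" "y \<in> D" "R x y" for x y
          using ad[OF that] M unfolding adm_def by blast
        have c: "(N-1,0) \<in> D" "(0,N-1) \<in> D" using M unfolding Cm_def by auto
        show ?thesis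
        proof (cases "Hok D N \<or> Vok D N")
          case True
          have cf: "fst ` D = {0..<N}" by (rule cover_all[OF cc adjf bdf c(2) _ c(1)]) auto
          have cs: "snd ` D = {0..<N}" by (rule cover_all[OF cc adjs bds c(1) _ c(2)]) auto
          have W: "(\<exists>p. (0,p) \<in> D \<and> (N-1,p) \<in> D) \<or> (\<exists>p. (0,p) \<in> D \<and> (N-1,Suc p) \<in> D)
            \<or> (\<exists>a. (a,0) \<in> D \<and> (a,N-1) \<in> D) \<or> (\<exists>a. (a,0) \<in> D \<and> (Suc a,N-1) \<in> D)"
            using True M unfolding Hok_def Vok_def by blast
          have "cutconn shr D"
          proof (rule share_conn_m[OF cc _ c(1) cf cs W])
            fix x y assume "x \<in> D" "y \<in> D" "R x y"
            then show "isH x y \<or> isV x y \<or> isDm x y" using R3 by blast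
          qed
          then show ?thesis using share_count[OF fin _ cf cs N1] by blast
        next
          case False
          have "card D \<le> N"
          proof (rule const_card[OF cc x0, of "\<lambda>z. fst z + snd z" fst])
            fix x y assume "x \<in> D" "y \<in> D" "R x y"
            then have "isDm x y" using R3 False by blast
            then show "fst x + snd x = fst y + snd y" unfolding isDm_def by auto
          qed (use gf in \<open>auto simp: prod_eq_iff\<close>)
          then show ?thesis using big by simp
        qed
      qed
    qed
  qed
qed


lemma real_match:
  fixes u v :: real and d d' :: nat
  assumes "0 \<le> u" "u \<le> 1" "0 \<le> v" "v \<le> 1" "u + real d = v + real d'"
  shows "d = d' \<or> (d' = Suc d \<and> u = 1 \<and> v = 0) \<or> (d = Suc d' \<and> u = 0 \<and> v = 1)"
proof -
  have "real d' \<le> real d + 1" "real d \<le> real d' + 1" using assms by linarith+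
  then have "d' \<le> d + 1" "d \<le> d' + 1" by linarith+
  then consider "d = d'" | "d' = Suc d" | "d = Suc d'" by linarith
  then show ?thesis
  proof cases
    case 2 then have "u = v + 1" using assms(5) by simp
    then show ?thesis using 2 assms by simp
  next
    case 3 then have "v = u + 1" using assms(5) by simp
    then show ?thesis using 3 assms by simp
  qed simp
qed

lemma real_zero_sum:
  fixes u :: real and d :: nat
  assumes "0 \<le> u" "u + real d = 0" shows "d = 0 \<and> u = 0"
  using assms by (metis add_increasing2 add_nonneg_eq_0_iff of_nat_0_eq_iff of_nat_0_le_iff)

lemma real_top_sum:
  fixes u :: real and d N :: nat
  assumes "u \<le> 1" "d < N" "u + real d = real N" shows "d = N - 1 \<and> u = 1"
proof -
  have "real N \<le> 1 + real d" using assms by linarith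
  then have "N \<le> 1 + d" by linarith
  then have "d = N - 1" using assms(2) by simp
  moreover then have "u = real N - real (N - 1)" using assms(3) by simp
  ultimately show ?thesis using assms(2) by (simp add: of_nat_diff)
qed

context gsc
begin

lemma F_bd:
  assumes "p \<in> Finf N D" shows "0 \<le> fst p" "fst p \<le> 1" "0 \<le> snd p" "snd p \<le> 1"
  using Finf_sq assms unfolding sq_def by (auto simp: mem_Times_iff)

lemma decomp:
  assumes "(x,y) \<in> Finf N D"
  obtains c d x' y' where "(c,d) \<in> D" "(x',y') \<in> Finf N D" "x = (x' + real c) / real N" "y = (y' + real d) / real N"
proof -
  obtain i q where "i \<in> D" "q \<in> Finf N D" "(x,y) = gsc_map N i q"
    using assms Finf_inv by blast
  then have "x = fst (gsc_map N i q)" "y = snd (gsc_map N i q)" "i \<in> D" "(fst q, snd q) \<in> Finf N D"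
    by (metis fst_conv, metis snd_conv, simp, simp)
  then show ?thesis using that[of "fst i" "snd i" "fst q" "snd q"] by (simp add: gsc_map_fst gsc_map_snd)
qed

lemma mulN: "(z::real) = (w + real c) / real N \<Longrightarrow> z * real N = w + real c"
  using Npos by (simp add: field_simps)

lemma cD: "(c,d) \<in> D \<Longrightarrow> c < N \<and> d < N" using Dg by auto

lemma left_edge:
  assumes "(0,y) \<in> Finf N D"
  obtains d y' where "(0,d) \<in> D" "(0,y') \<in> Finf N D" "y * real N = y' + real d"
proof -
  obtain c d x' y' where h: "(c,d) \<in> D" "(x',y') \<in> Finf N D" "0 = (x' + real c) / real N" "y = (y' + real d) / real N"
    using decomp[OF assms] by blast
  have "0 \<le> x'" using F_bd[OF h(2)] by simp
  moreover have "x' + real c = 0" using mulN[OF h(3)] by simp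
  ultimately have e: "c = 0" "x' = 0" using real_zero_sum[of x' c] by blast+
  show ?thesis
  proof (rule that[of d y'])
    show "(0,d) \<in> D" using h(1) e by simp
    show "(0,y') \<in> Finf N D" using h(2) e by simp
    show "y * real N = y' + real d" using mulN[OF h(4)] .
  qed
qed

lemma right_edge:
  assumes "(1,y) \<in> Finf N D"
  obtains d y' where "(N-1,d) \<in> D" "(1,y') \<in> Finf N D" "y * real N = y' + real d"
proof -
  obtain c d x' y' where h: "(c,d) \<in> D" "(x',y') \<in> Finf N D" "1 = (x' + real c) / real N" "y = (y' + real d) / real N"
    using decomp[OF assms] by blast
  have "x' \<le> 1" using F_bd[OF h(2)] by simp
  moreover have "x' + real c = real N" using mulN[OF h(3)] by simp
  ultimately have e: "c = N - 1" "x' = 1" using real_top_sum[of x' c N] cD[OF h(1)] by blast+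
  show ?thesis
  proof (rule that[of d y'])
    show "(N-1,d) \<in> D" using h(1) e by simp
    show "(1,y') \<in> Finf N D" using h(2) e by simp
    show "y * real N = y' + real d" using mulN[OF h(4)] .
  qed
qed

lemma bottom_edge:
  assumes "(x,0) \<in> Finf N D"
  obtains c x' where "(c,0) \<in> D" "(x',0) \<in> Finf N D" "x * real N = x' + real c"
proof -
  obtain c d x' y' where h: "(c,d) \<in> D" "(x',y') \<in> Finf N D" "x = (x' + real c) / real N" "0 = (y' + real d) / real N"
    using decomp[OF assms] by blast
  have "0 \<le> y'" using F_bd[OF h(2)] by simp
  moreover have "y' + real d = 0" using mulN[OF h(4)] by simp
  ultimately have e: "d = 0" "y' = 0" using real_zero_sum[of y' d] by blast+
  show ?thesis
  proof (rule that[of c x'])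
    show "(c,0) \<in> D" using h(1) e by simp
    show "(x',0) \<in> Finf N D" using h(2) e by simp
    show "x * real N = x' + real c" using mulN[OF h(3)] .
  qed
qed

lemma top_edge:
  assumes "(x,1) \<in> Finf N D"
  obtains c x' where "(c,N-1) \<in> D" "(x',1) \<in> Finf N D" "x * real N = x' + real c"
proof -
  obtain c d x' y' where h: "(c,d) \<in> D" "(x',y') \<in> Finf N D" "x = (x' + real c) / real N" "1 = (y' + real d) / real N"
    using decomp[OF assms] by blast
  have "y' \<le> 1" using F_bd[OF h(2)] by simp
  moreover have "y' + real d = real N" using mulN[OF h(4)] by simp
  ultimately have e: "d = N - 1" "y' = 1" using real_top_sum[of y' d N] cD[OF h(1)] by blast+
  show ?thesis
  proof (rule that[of c x'])
    show "(c,N-1) \<in> D" using h(1) e by simp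
    show "(x',1) \<in> Finf N D" using h(2) e by simp
    show "x * real N = x' + real c" using mulN[OF h(3)] .
  qed
qed

lemma c00: "(0,0) \<in> Finf N D \<Longrightarrow> (0,0) \<in> D"
proof -
  assume a: "(0,0) \<in> Finf N D"
  obtain d y' where h: "(0,d) \<in> D" "(0,y') \<in> Finf N D" "0 * real N = y' + real d" by (rule left_edge[OF a])
  have "d = 0 \<and> y' = 0" using real_zero_sum[of y' d] F_bd[OF h(2)] h(3) by simp
  then show ?thesis using h by simp
qed

lemma c01: "(0,1) \<in> Finf N D \<Longrightarrow> (0,N-1) \<in> D"
proof -
  assume a: "(0,1) \<in> Finf N D"
  obtain d y' where h: "(0,d) \<in> D" "(0,y') \<in> Finf N D" "1 * real N = y' + real d" by (rule left_edge[OF a])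
  have "d = N - 1 \<and> y' = 1" using real_top_sum[of y' d N] F_bd[OF h(2)] h(3) cD[OF h(1)] by simp
  then show ?thesis using h by simp
qed

lemma c10: "(1,0) \<in> Finf N D \<Longrightarrow> (N-1,0) \<in> D"
proof -
  assume a: "(1,0) \<in> Finf N D"
  obtain d y' where h: "(N-1,d) \<in> D" "(1,y') \<in> Finf N D" "0 * real N = y' + real d" by (rule right_edge[OF a])
  have "d = 0 \<and> y' = 0" using real_zero_sum[of y' d] F_bd[OF h(2)] h(3) by simp
  then show ?thesis using h by simp
qed

lemma c11: "(1,1) \<in> Finf N D \<Longrightarrow> (N-1,N-1) \<in> D"
proof -
  assume a: "(1,1) \<in> Finf N D"
  obtain d y' where h: "(N-1,d) \<in> D" "(1,y') \<in> Finf N D" "1 * real N = y' + real d" by (rule right_edge[OF a])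
  have "d = N - 1 \<and> y' = 1" using real_top_sum[of y' d N] F_bd[OF h(2)] h(3) cD[OF h(1)] by simp
  then show ?thesis using h by simp
qed

lemma Hok_of:
  assumes "(0,y) \<in> Finf N D" "(1,y) \<in> Finf N D"
  shows "Hok D N"
proof -
  obtain d y0 where l: "(0,d) \<in> D" "(0,y0) \<in> Finf N D" "y * real N = y0 + real d" by (rule left_edge[OF assms(1)])
  obtain d' y1 where r: "(N-1,d') \<in> D" "(1,y1) \<in> Finf N D" "y * real N = y1 + real d'" by (rule right_edge[OF assms(2)])
  have "d = d' \<or> (d' = Suc d \<and> y0 = 1 \<and> y1 = 0) \<or> (d = Suc d' \<and> y0 = 0 \<and> y1 = 1)"
    by (rule real_match) (use F_bd[OF l(2)] F_bd[OF r(2)] l(3) r(3) in auto)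
  then show ?thesis
  proof (elim disjE conjE)
    assume "d = d'" then show ?thesis using l r unfolding Hok_def by blast
  next
    assume h: "d' = Suc d" "y0 = 1" "y1 = 0"
    have "Cm D N" using c01 c10 l(2) r(2) h unfolding Cm_def by simp
    then show ?thesis using l(1) r(1) h unfolding Hok_def by blast
  next
    assume h: "d = Suc d'" "y0 = 0" "y1 = 1"
    have "Cp D N" using c00 c11 l(2) r(2) h unfolding Cp_def by simp
    then show ?thesis using l(1) r(1) h unfolding Hok_def by blast
  qed
qed

lemma Vok_of:
  assumes "(x,0) \<in> Finf N D" "(x,1) \<in> Finf N D"
  shows "Vok D N"
proof -
  obtain c x0 where l: "(c,0) \<in> D" "(x0,0) \<in> Finf N D" "x * real N = x0 + real c" by (rule bottom_edge[OF assms(1)])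
  obtain c' x1 where r: "(c',N-1) \<in> D" "(x1,1) \<in> Finf N D" "x * real N = x1 + real c'" by (rule top_edge[OF assms(2)])
  have "c = c' \<or> (c' = Suc c \<and> x0 = 1 \<and> x1 = 0) \<or> (c = Suc c' \<and> x0 = 0 \<and> x1 = 1)"
    by (rule real_match) (use F_bd[OF l(2)] F_bd[OF r(2)] l(3) r(3) in auto)
  then show ?thesis
  proof (elim disjE conjE)
    assume "c = c'" then show ?thesis using l r unfolding Vok_def by blast
  next
    assume h: "c' = Suc c" "x0 = 1" "x1 = 0"
    have "Cm D N" using c01 c10 l(2) r(2) h unfolding Cm_def by simp
    then show ?thesis using l(1) r(1) h unfolding Vok_def by blast
  next
    assume h: "c = Suc c'" "x0 = 0" "x1 = 1"
    have "Cp D N" using c00 c11 l(2) r(2) h unfolding Cp_def by simp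
    then show ?thesis using l(1) r(1) h unfolding Vok_def by blast
  qed
qed

end


context gsc
begin

lemma Finv1: "Finf N D \<subseteq> (\<Union>i\<in>D. gsc_map N i ` Finf N D)"
  by (rule equalityD1[OF Finf_inv])
lemma Finv2: "i \<in> D \<Longrightarrow> q \<in> Finf N D \<Longrightarrow> gsc_map N i q \<in> Finf N D"
  using equalityD2[OF Finf_inv] by blast

lemma piece_adm:
  assumes ij: "i \<in> D" "j \<in> D" "i \<noteq> j" and uv: "u \<in> Finf N D" "v \<in> Finf N D"
    and eq: "gsc_map N i u = gsc_map N j v"
  shows "adm D N i j"
proof -
  obtain a b where i: "i = (a,b)" by fastforce
  obtain a' b' where j: "j = (a',b')" by fastforce
  obtain u1 u2 where u: "u = (u1,u2)" by fastforce
  obtain v1 v2 where v: "v = (v1,v2)" by fastforce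
  have e1: "(u1 + real a) / real N = (v1 + real a') / real N" and e2: "(u2 + real b) / real N = (v2 + real b') / real N"
    using eq unfolding i j u v gsc_map_pair by simp_all
  have e1': "u1 + real a = v1 + real a'" using e1 Npos by (simp add: divide_cancel_right)
  have e2': "u2 + real b = v2 + real b'" using e2 Npos by (simp add: divide_cancel_right)
  have bu: "0 \<le> u1" "u1 \<le> 1" "0 \<le> u2" "u2 \<le> 1" using F_bd[OF uv(1)] u by auto
  have bv: "0 \<le> v1" "v1 \<le> 1" "0 \<le> v2" "v2 \<le> 1" using F_bd[OF uv(2)] v by auto
  have X: "a = a' \<or> (a' = Suc a \<and> u1 = 1 \<and> v1 = 0) \<or> (a = Suc a' \<and> u1 = 0 \<and> v1 = 1)"
    by (rule real_match) (use bu bv e1' in auto)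
  have Y: "b = b' \<or> (b' = Suc b \<and> u2 = 1 \<and> v2 = 0) \<or> (b = Suc b' \<and> u2 = 0 \<and> v2 = 1)"
    by (rule real_match) (use bu bv e2' in auto)
  have uF: "(u1,u2) \<in> Finf N D" and vF: "(v1,v2) \<in> Finf N D" using uv u v by auto
  have Hc: "Hok D N" if "b = b'" "(u1 = 1 \<and> v1 = 0) \<or> (u1 = 0 \<and> v1 = 1)"
  proof -
    have "u2 = v2" using e2' that(1) by simp
    then show ?thesis using that(2)
    proof (elim disjE conjE)
      assume "u2 = v2" "u1 = 1" "v1 = 0"
      then show ?thesis using Hok_of[of u2] uF vF by simp
    next
      assume "u2 = v2" "u1 = 0" "v1 = 1"
      then show ?thesis using Hok_of[of u2] uF vF by simp
    qed
  qed
  have Vc: "Vok D N" if "a = a'" "(u2 = 1 \<and> v2 = 0) \<or> (u2 = 0 \<and> v2 = 1)"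
  proof -
    have "u1 = v1" using e1' that(1) by simp
    then show ?thesis using that(2)
    proof (elim disjE conjE)
      assume "u1 = v1" "u2 = 1" "v2 = 0"
      then show ?thesis using Vok_of[of u1] uF vF by simp
    next
      assume "u1 = v1" "u2 = 0" "v2 = 1"
      then show ?thesis using Vok_of[of u1] uF vF by simp
    qed
  qed
  show ?thesis using X
  proof (elim disjE conjE)
    assume xa: "a = a'"
    show ?thesis using Y
    proof (elim disjE conjE)
      assume "b = b'" then show ?thesis using xa ij i j by simp
    next
      assume h: "b' = Suc b" "u2 = 1" "v2 = 0"
      then have "Vok D N" using Vc xa by blast
      then show ?thesis using h xa unfolding i j adm_def isV_def by simp
    next
      assume h: "b = Suc b'" "u2 = 0" "v2 = 1"
      then have "Vok D N" using Vc xa by blast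
      then show ?thesis using h xa unfolding i j adm_def isV_def by simp
    qed
  next
    assume xa: "a' = Suc a" "u1 = 1" "v1 = 0"
    show ?thesis using Y
    proof (elim disjE conjE)
      assume h: "b = b'"
      then have "Hok D N" using Hc xa by blast
      then show ?thesis using h xa unfolding i j adm_def isH_def by simp
    next
      assume h: "b' = Suc b" "u2 = 1" "v2 = 0"
      have "Cp D N" using c00 c11 uF vF h xa unfolding Cp_def by simp
      then show ?thesis using h xa unfolding i j adm_def isDp_def by simp
    next
      assume h: "b = Suc b'" "u2 = 0" "v2 = 1"
      have "Cm D N" using c01 c10 uF vF h xa unfolding Cm_def by simp
      then show ?thesis using h xa unfolding i j adm_def isDm_def by simp
    qed
  next
    assume xa: "a = Suc a'" "u1 = 0" "v1 = 1"
    show ?thesis using Y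
    proof (elim disjE conjE)
      assume h: "b = b'"
      then have "Hok D N" using Hc xa by blast
      then show ?thesis using h xa unfolding i j adm_def isH_def by simp
    next
      assume h: "b' = Suc b" "u2 = 1" "v2 = 0"
      have "Cm D N" using c01 c10 uF vF h xa unfolding Cm_def by simp
      then show ?thesis using h xa unfolding i j adm_def isDm_def by simp
    next
      assume h: "b = Suc b'" "u2 = 0" "v2 = 1"
      have "Cp D N" using c00 c11 uF vF h xa unfolding Cp_def by simp
      then show ?thesis using h xa unfolding i j adm_def isDp_def by simp
    qed
  qed
qed

lemma conn_cut:
  assumes conn: "connected (Finf N D)"
  shows "cutconn (\<lambda>i j. i \<noteq> j \<and> (\<exists>u\<in>Finf N D. \<exists>v\<in>Finf N D. gsc_map N i u = gsc_map N j v)) D"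
  unfolding cutconn_def
proof (intro allI impI)
  fix S assume S: "S \<subseteq> D" "S \<noteq> {}" "S \<noteq> D"
  show "\<exists>x\<in>S. \<exists>y\<in>D - S. x \<noteq> y \<and> (\<exists>u\<in>Finf N D. \<exists>v\<in>Finf N D. gsc_map N x u = gsc_map N y v)"
  proof (rule ccontr)
    assume ns: "\<not> ?thesis"
    let ?A = "\<Union>i\<in>S. gsc_map N i ` Finf N D"
    let ?B = "\<Union>i\<in>D - S. gsc_map N i ` Finf N D"
    have finS: "finite S" using S(1) finD finite_subset by blast
    have finS': "finite (D - S)" using finD by blast
    have cA: "closed ?A"
      by (intro compact_imp_closed compact_UN finS compact_continuous_image gsc_map_cont Finf_compact)
    have cB: "closed ?B"
      by (intro compact_imp_closed compact_UN finS' compact_continuous_image gsc_map_cont Finf_compact)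
    have cov: "Finf N D \<subseteq> ?A \<union> ?B"
    proof
      fix z assume "z \<in> Finf N D"
      then obtain i where "i \<in> D" "z \<in> gsc_map N i ` Finf N D" using Finv1 by blast
      then show "z \<in> ?A \<union> ?B" by blast
    qed
    have dis: "?A \<inter> ?B \<inter> Finf N D = {}"
    proof (rule ccontr)
      assume "?A \<inter> ?B \<inter> Finf N D \<noteq> {}"
      then obtain z i j u v where "i \<in> S" "j \<in> D - S" "u \<in> Finf N D" "v \<in> Finf N D"
          "z = gsc_map N i u" "z = gsc_map N j v" by blast
      moreover then have "i \<noteq> j" by blast
      ultimately show False using ns by blast
    qed
    obtain q where q: "q \<in> Finf N D" using Finf_ne by blast
    obtain i0 where i0: "i0 \<in> S" using S by blast
    obtain j0 where j0: "j0 \<in> D" "j0 \<notin> S" using S by blast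
    have "gsc_map N i0 q \<in> Finf N D" using Finv2 i0 S(1) q by blast
    then have "?A \<inter> Finf N D \<noteq> {}" using i0 q by blast
    moreover have "gsc_map N j0 q \<in> Finf N D" using Finv2 j0 q by blast
    then have "?B \<inter> Finf N D \<noteq> {}" using j0 q by blast
    ultimately show False using connected_closedD[OF conn dis cov cA cB] by blast
  qed
qed

end

lemma part1:
  assumes N: "N \<ge> 2" and Dg: "D \<subseteq> {0..<N} \<times> {0..<N}" and big: "card D > N"
    and conn: "connected (GSC N D)"
  shows "2 * N - 1 \<le> card D"
proof -
  have "D \<noteq> {}" using big by auto
  then interpret g: gsc N D using N Dg by unfold_locales
  have "connected (Finf N D)" using conn g.GSC_eq by simp
  then have cc: "cutconn (\<lambda>i j. i \<noteq> j \<and> (\<exists>u\<in>Finf N D. \<exists>v\<in>Finf N D. gsc_map N i u = gsc_map N j v)) D"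
    by (rule g.conn_cut)
  show ?thesis
  proof (rule comb[OF N Dg big cc])
    fix x y assume "x \<in> D" "y \<in> D" "x \<noteq> y \<and> (\<exists>u\<in>Finf N D. \<exists>v\<in>Finf N D. gsc_map N x u = gsc_map N y v)"
    then show "adm D N x y" using g.piece_adm by blast
  qed
qed


context gsc
begin

lemma Fk_pts:
  shows "(0,0) \<in> D \<Longrightarrow> (0,0) \<in> Fk N D k"
    and "(N-1,0) \<in> D \<Longrightarrow> (1,0) \<in> Fk N D k"
    and "(0,N-1) \<in> D \<Longrightarrow> (0,1) \<in> Fk N D k"
proof -
  have rN: "(1 + real (N - 1)) / real N = 1" using Npos by (simp add: of_nat_diff)
  show "(0,0) \<in> D \<Longrightarrow> (0,0) \<in> Fk N D k"
  proof (induction k)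
    case 0 show ?case by (simp add: sq_def)
  next
    case (Suc k)
    have m: "(0,0) \<in> Fk N D k" using Suc by simp
    have m2: "gsc_map N (0,0) (0,0) \<in> Fk N D (Suc k)" unfolding Fk.simps by (rule UN_I[OF Suc.prems imageI[OF m]])
    have eq: "gsc_map N (0,0) (0,0) = (0,0)" by (simp add: gsc_map_pair)
    show ?case using m2 by (simp only: eq)
  qed
  show "(N-1,0) \<in> D \<Longrightarrow> (1,0) \<in> Fk N D k"
  proof (induction k)
    case 0 show ?case by (simp add: sq_def)
  next
    case (Suc k)
    have m: "(1,0) \<in> Fk N D k" using Suc by simp
    have m2: "gsc_map N (N-1,0) (1,0) \<in> Fk N D (Suc k)" unfolding Fk.simps by (rule UN_I[OF Suc.prems imageI[OF m]])
    have eq: "gsc_map N (N-1,0) (1,0) = (1,0)" using Npos by (simp add: gsc_map_pair of_nat_diff)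
    show ?case using m2 by (simp only: eq)
  qed
  show "(0,N-1) \<in> D \<Longrightarrow> (0,1) \<in> Fk N D k"
  proof (induction k)
    case 0 show ?case by (simp add: sq_def)
  next
    case (Suc k)
    have m: "(0,1) \<in> Fk N D k" using Suc by simp
    have m2: "gsc_map N (0,N-1) (0,1) \<in> Fk N D (Suc k)" unfolding Fk.simps by (rule UN_I[OF Suc.prems imageI[OF m]])
    have eq: "gsc_map N (0,N-1) (0,1) = (0,1)" using Npos by (simp add: gsc_map_pair of_nat_diff)
    show ?case using m2 by (simp only: eq)
  qed
qed

lemma conn_L:
  assumes d00: "(0,0) \<in> D" and dN0: "(N-1,0) \<in> D"
    and lc: "\<And>a b. (a,b) \<in> D \<Longrightarrow> 0 < a \<Longrightarrow> (a-1,b) \<in> D"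
    and col: "\<And>b. (0,b) \<in> D \<Longrightarrow> 0 < b \<Longrightarrow> (0,b-1) \<in> D \<and> (0,N-1) \<in> D"
  shows "connected (GSC N D)"
proof -
  have ck: "connected (Fk N D k)" for k
  proof (induction k)
    case 0 show ?case unfolding Fk.simps sq_def
      by (intro convex_connected convex_Times convex_real_interval)
  next
    case (Suc k)
    define U where "U = Fk N D (Suc k)"
    have PU: "gsc_map N i ` Fk N D k \<subseteq> U" if "i \<in> D" for i unfolding U_def using that by auto
    have Pc: "connected (gsc_map N i ` Fk N D k)" for i
      by (rule connected_continuous_image[OF gsc_map_cont Suc])
    have cci: "connected_component U (gsc_map N i p) (gsc_map N i q)"
      if "i \<in> D" "p \<in> Fk N D k" "q \<in> Fk N D k" for i p q
      by (rule connected_componentI[OF Pc PU[OF that(1)]]) (use that in auto)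
    have p00: "(0,0) \<in> Fk N D k" by (rule Fk_pts(1)[OF d00])
    have p10: "(1,0) \<in> Fk N D k" by (rule Fk_pts(2)[OF dN0])
    have g00: "gsc_map N (0,0) (0,0) = (0,0)" by (simp add: gsc_map_pair)
    have claim: "\<forall>a b. a + b = n \<longrightarrow> (a,b) \<in> D \<longrightarrow> connected_component U (0,0) (gsc_map N (a,b) (0,0))" for n
    proof (induction n rule: less_induct)
      case (less n)
      show ?case
      proof (intro allI impI)
        fix a b assume ab: "a + b = n" "(a,b) \<in> D"
        show "connected_component U (0,0) (gsc_map N (a,b) (0,0))"
        proof (cases "a > 0")
          case True
          have d1: "(a-1,b) \<in> D" using lc[OF ab(2) True] .
          have ih: "connected_component U (0,0) (gsc_map N (a-1,b) (0,0))"
            using less.IH[of "a - 1 + b"] True ab d1 by auto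
          have "gsc_map N (a-1,b) (1,0) = gsc_map N (a,b) (0,0)"
            using True by (simp add: gsc_map_pair of_nat_diff)
          moreover have "connected_component U (gsc_map N (a-1,b) (0,0)) (gsc_map N (a-1,b) (1,0))"
            by (rule cci[OF d1 p00 p10])
          ultimately show ?thesis using ih connected_component_trans by metis
        next
          case False
          then have a0: "a = 0" by simp
          show ?thesis
          proof (cases "b > 0")
            case True
            have d1: "(0,b-1) \<in> D" and dt: "(0,N-1) \<in> D" using col[of b] ab(2) a0 True by auto
            have p01: "(0,1) \<in> Fk N D k" by (rule Fk_pts(3)[OF dt])
            have ih: "connected_component U (0,0) (gsc_map N (0,b-1) (0,0))"
              using less.IH[of "b - 1"] True ab d1 a0 by auto
            have "gsc_map N (0,b-1) (0,1) = gsc_map N (a,b) (0,0)"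
              using True a0 by (simp add: gsc_map_pair of_nat_diff)
            moreover have "connected_component U (gsc_map N (0,b-1) (0,0)) (gsc_map N (0,b-1) (0,1))"
              by (rule cci[OF d1 p00 p01])
            ultimately show ?thesis using ih connected_component_trans by metis
          next
            case False
            then have "b = 0" by simp
            then have "gsc_map N (a,b) (0,0) = (0,0)" using a0 g00 by simp
            moreover have "(0,0) \<in> U"
            proof -
              have "gsc_map N (0,0) (0,0) \<in> U" using PU[OF d00] imageI[OF p00] by blast
              then show ?thesis by (simp only: g00)
            qed
            ultimately show ?thesis by simp
          qed
        qed
      qed
    qed
    have toall: "connected_component U (0,0) x" if xU: "x \<in> U" for x
    proof -
      obtain i p where ip: "i \<in> D" "p \<in> Fk N D k" "x = gsc_map N i p" using xU unfolding U_def Fk.simps by blast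
      obtain a b where i: "i = (a,b)" by fastforce
      have "connected_component U (0,0) (gsc_map N i (0,0))" using claim[of "a+b"] ip(1) i by blast
      moreover have "connected_component U (gsc_map N i (0,0)) x" using cci[OF ip(1) p00 ip(2)] ip(3) by simp
      ultimately show ?thesis using connected_component_trans by metis
    qed
    have "connected U" unfolding connected_iff_connected_component
      using toall connected_component_sym connected_component_trans by metis
    then show ?case unfolding U_def .
  qed
  have "connected (\<Inter>(range (Fk N D)))"
    by (rule connected_nest[OF Fk_compact ck Fk_mono])
  then show ?thesis using GSC_eq unfolding Finf_def by simp
qed

end

lemma ex_E:
  fixes N :: nat
  shows "m \<le> (N-1)*(N-1) \<Longrightarrow> \<exists>E. E \<subseteq> {1..<N} \<times> {1..<N} \<and> card E = m \<and> (\<forall>a b. (a,b) \<in> E \<longrightarrow> 2 \<le> a \<longrightarrow> (a-1,b) \<in> E)"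
proof (induction m)
  case 0 show ?case by (intro exI[of _ "{}"]) simp
next
  case (Suc m)
  then obtain E where E: "E \<subseteq> {1..<N} \<times> {1..<N}" "card E = m" "\<forall>a b. (a,b) \<in> E \<longrightarrow> 2 \<le> a \<longrightarrow> (a-1,b) \<in> E"
    by auto
  have ci: "card ({1..<N} \<times> {1..<N}) = (N-1)*(N-1)" by (simp add: card_cartesian_product)
  have "\<not> {1..<N} \<times> {1..<N} \<subseteq> E"
  proof
    assume "{1..<N} \<times> {1..<N} \<subseteq> E"
    then have "card ({1..<N} \<times> {1..<N}) \<le> card E"
      using E(1) by (intro card_mono) (auto intro: finite_subset)
    then show False using ci E(2) Suc.prems by simp
  qed
  then obtain z where z: "z \<in> {1..<N} \<times> {1..<N}" "z \<notin> E" by blast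
  obtain a0 b where zz: "z = (a0,b)" by fastforce
  have ab0: "a0 \<in> {1..<N}" "b \<in> {1..<N}" "(a0,b) \<notin> E" using z zz by auto
  define P where "P = (\<lambda>a. 1 \<le> a \<and> a < N \<and> (a,b) \<notin> E)"
  have Pa0: "P a0" using ab0 unfolding P_def by simp
  define a where "a = (LEAST a. P a)"
  have Pa: "P a" unfolding a_def by (rule LeastI[of P a0, OF Pa0])
  have mina: "\<not> P c" if "c < a" for c using not_less_Least[of c P] that unfolding a_def by blast
  have finE: "finite E" using E(1) by (rule finite_subset) (intro finite_cartesian_product finite_atLeastLessThan)
  let ?E = "insert (a,b) E"
  show ?case
  proof (intro exI[of _ ?E] conjI allI impI)
    show "?E \<subseteq> {1..<N} \<times> {1..<N}" using E(1) Pa ab0 unfolding P_def by auto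
    show "card ?E = Suc m" using Pa finE E(2) unfolding P_def by simp
    fix a' b' assume h: "(a',b') \<in> ?E" "2 \<le> a'"
    show "(a'-1,b') \<in> ?E"
    proof (cases "(a',b') = (a,b)")
      case True
      then have "\<not> P (a-1)" using mina[of "a-1"] h by auto
      then have "(a-1,b) \<in> E" using Pa h True unfolding P_def by auto
      then show ?thesis using True by simp
    next
      case False
      then show ?thesis using h E(3) by auto
    qed
  qed
qed

lemma part2:
  fixes N k :: nat
  assumes N: "N \<ge> 2" and k: "(2 * N - 1 \<le> k \<and> k \<le> N ^ 2 - 1) \<or> k = N"
  shows "\<exists>D. D \<subseteq> {0..<N} \<times> {0..<N} \<and> card D = k \<and> connected (GSC N D)"
proof (cases "k = N")
  case True
  let ?D = "{0..<N} \<times> {0::nat}"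
  have Dg: "?D \<subseteq> {0..<N} \<times> {0..<N}" using N by auto
  interpret g: gsc N ?D using N Dg by unfold_locales auto
  have "connected (GSC N ?D)"
    by (rule g.conn_L) (use N in auto)
  moreover have "card ?D = k" using True by (simp add: card_cartesian_product)
  ultimately show ?thesis using Dg by blast
next
  case False
  then have k2: "2 * N - 1 \<le> k" "k \<le> N ^ 2 - 1" using k by auto
  obtain n where n: "N = Suc n" using N by (cases N) auto
  have "N ^ 2 = n * n + 2 * n + 1" unfolding n by (simp add: power2_eq_square)
  then have mb: "k - (2 * N - 1) \<le> (N-1)*(N-1)" using k2 n by simp
  obtain E where E: "E \<subseteq> {1..<N} \<times> {1..<N}" "card E = k - (2 * N - 1)"
      "\<forall>a b. (a,b) \<in> E \<longrightarrow> 2 \<le> a \<longrightarrow> (a-1,b) \<in> E"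
    using ex_E[OF mb] by blast
  let ?A = "{0..<N} \<times> {0::nat}"
  let ?B = "{0::nat} \<times> {1..<N}"
  let ?D = "?A \<union> ?B \<union> E"
  have Dg: "?D \<subseteq> {0..<N} \<times> {0..<N}" using N E(1) by auto
  interpret g: gsc N ?D using N Dg by unfold_locales auto
  have finE: "finite E" using E(1) by (rule finite_subset) (intro finite_cartesian_product finite_atLeastLessThan)
  have "card ?D = card (?A \<union> ?B) + card E"
    by (rule card_Un_disjoint) (use finE E(1) in auto)
  moreover have "card (?A \<union> ?B) = card ?A + card ?B"
    by (rule card_Un_disjoint) auto
  moreover have "card ?A = N" "card ?B = N - 1" by (simp_all add: card_cartesian_product)
  ultimately have "card ?D = k" using E(2) k2 N by simp
  moreover have "connected (GSC N ?D)"
  proof (rule g.conn_L)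
    show "(0,0) \<in> ?D" "(N-1,0) \<in> ?D" using N by auto
    fix a b assume ab: "(a,b) \<in> ?D" "0 < a"
    show "(a-1,b) \<in> ?D"
    proof (cases "b = 0")
      case True then show ?thesis using ab Dg by auto
    next
      case False
      then have abE: "(a,b) \<in> E" using ab by auto
      then have "b \<in> {1..<N}" "a \<in> {1..<N}" using E(1) by auto
      then show ?thesis using E(3) abE by (cases "a = 1") auto
    qed
  next
    fix b assume b: "(0,b) \<in> ?D" "0 < b"
    then have "b < N" using Dg by auto
    then show "(0,b-1) \<in> ?D \<and> (0,N-1) \<in> ?D" using b N by auto
  qed
  ultimately show ?thesis using Dg by blast
qed


theorem mainTheorem6:
  fixes N :: nat
  assumes "N \<ge> 2"
  shows "(\<forall>D. D \<subseteq> {0..<N} \<times> {0..<N} \<and> 1 < card D \<and> card D < N ^ 2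
              \<and> connected (GSC N D) \<and> card D > N \<longrightarrow> card D \<ge> 2 * N - 1)
       \<and> (\<forall>k::nat. ((2 * N - 1 \<le> k \<and> k \<le> N ^ 2 - 1) \<or> k = N) \<longrightarrow>
              (\<exists>D. D \<subseteq> {0..<N} \<times> {0..<N} \<and> card D = k \<and> connected (GSC N D)))"
proof (intro conjI allI impI)
  fix D :: "(nat \<times> nat) set"
  assume h: "D \<subseteq> {0..<N} \<times> {0..<N} \<and> 1 < card D \<and> card D < N ^ 2 \<and> connected (GSC N D) \<and> card D > N"
  then show "card D \<ge> 2 * N - 1" using part1[OF assms] by blast
next
  fix k :: nat
  assume "(2 * N - 1 \<le> k \<and> k \<le> N ^ 2 - 1) \<or> k = N"
  then show "\<exists>D. D \<subseteq> {0..<N} \<times> {0..<N} \<and> card D = k \<and> connected (GSC N D)"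
    using part2[OF assms] by blast
qed

end
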